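(* Let $K$ be a commutative integral domain, $n,r\ge1$, $V$ a free $K$-module of rank $n$, and $\Phi:K\mathfrak{S}_r\to\operatorname{End}_K(V^{\otimes r})$ the representation given by right place permutations $(u_1\otimes\cdots\otimes u_r)\sigma=u_{1\sigma^{-1}}\otimes\cdots\otimes u_{r\sigma^{-1}}$. Let $P$ be the set of partitions $\lambda$ of $r$ with $\lambda_1>n$, and let $A[P]\subseteq K\mathfrak{S}_r$ be the $K$-span of all $y_{ST}$ where $(S,T)$ ranges over pairs of standard $\lambda$-tableaux with $\lambda\in P$. Then $A[P]\subseteq\ker\Phi$.
   Context: For a composition $\lambda$ of $r$, a $\lambda$-tableau is a bijective filling of the Young diagram of shape $\lambda$ (row $i$ has $\lambda_i$ boxes) with $1,\dots,r$; it is row standard if entries increase along rows, standard if they also increase down columns. $\mathfrak{S}_r$ acts on tableaux on the right by permuting entries. $T^\lambda$ is the $\lambda$-tableau with $1,\dots,r$ entered in order left to right along rows, top to bottom; $\mathfrak{S}_\lambda$ is its row stabilizer (the Young subgroup). For a row standard $\lambda$-tableau $T$, $d(T)\in\mathfrak{S}_r$ is the unique element with $T=T^\lambda d(T)$. Set $y_\lambda=\sum_{w\in\mathfrak{S}_\lambda}(\operatorname{sgn}w)w$ and $y_{ST}=d(S)^{-1}y_\lambda d(T)$. Permutations compose as $a(\sigma\tau)=(a\sigma)\tau$. *)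

theory Defs
  imports "HOL-Combinatorics.Permutations" "HOL-Library.FuncSet"
begin

text \<open>Entries of tableaux and the letters permuted by the symmetric group
are 0,...,r-1 (an order-preserving relabelling of 1,...,r).  The group law follows the paper's right-action
convention a(sigma tau) = (a sigma) tau, i.e. the product sigma tau is the function
composition tau o sigma.\<close>

definition perms :: "nat \<Rightarrow> (nat \<Rightarrow> nat) set" where
  "perms r = {\<sigma>. \<sigma> permutes {..<r}}"

definition is_partition :: "nat list \<Rightarrow> nat \<Rightarrow> bool" where
  "is_partition lam r \<longleftrightarrow> sorted_wrt (\<ge>) lam \<and> (\<forall>x\<in>set lam. 0 < x) \<and> sum_list lam = r"

definition boxes :: "nat list \<Rightarrow> (nat \<times> nat) set" where
  "boxes lam = {(i, j). i < length lam \<and> j < lam ! i}"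

definition tableau :: "nat list \<Rightarrow> (nat \<times> nat \<Rightarrow> nat) \<Rightarrow> bool" where
  "tableau lam T \<longleftrightarrow> bij_betw T (boxes lam) {..<sum_list lam}"

definition row_standard :: "nat list \<Rightarrow> (nat \<times> nat \<Rightarrow> nat) \<Rightarrow> bool" where
  "row_standard lam T \<longleftrightarrow> tableau lam T \<and>
     (\<forall>i j. (i, Suc j) \<in> boxes lam \<longrightarrow> T (i, j) < T (i, Suc j))"

definition standard :: "nat list \<Rightarrow> (nat \<times> nat \<Rightarrow> nat) \<Rightarrow> bool" where
  "standard lam T \<longleftrightarrow> row_standard lam T \<and>
     (\<forall>i j. (Suc i, j) \<in> boxes lam \<longrightarrow> T (i, j) < T (Suc i, j))"

definition Tlam :: "nat list \<Rightarrow> nat \<times> nat \<Rightarrow> nat" where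
  "Tlam lam = (\<lambda>(i, j). sum_list (take i lam) + j)"

definition tab_act :: "(nat \<times> nat \<Rightarrow> nat) \<Rightarrow> (nat \<Rightarrow> nat) \<Rightarrow> (nat \<times> nat \<Rightarrow> nat)" where
  "tab_act T \<sigma> = (\<lambda>b. \<sigma> (T b))"

definition dT :: "nat list \<Rightarrow> (nat \<times> nat \<Rightarrow> nat) \<Rightarrow> (nat \<Rightarrow> nat)" where
  "dT lam T = (THE \<sigma>. \<sigma> \<in> perms (sum_list lam) \<and>
      (\<forall>b\<in>boxes lam. T b = tab_act (Tlam lam) \<sigma> b))"

definition young_subgroup :: "nat list \<Rightarrow> (nat \<Rightarrow> nat) set" where
  "young_subgroup lam = {w \<in> perms (sum_list lam).
      \<forall>b\<in>boxes lam. \<exists>j. (fst b, j) \<in> boxes lam \<and> w (Tlam lam b) = Tlam lam (fst b, j)}"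

definition group_alg :: "nat \<Rightarrow> ((nat \<Rightarrow> nat) \<Rightarrow> 'a::comm_ring_1) set" where
  "group_alg r = {x. \<forall>\<sigma>. \<sigma> \<notin> perms r \<longrightarrow> x \<sigma> = 0}"

text \<open>y_ST = d(S)^{-1} y_lam d(T) = sum over w in S_lam of sgn(w) d(S)^{-1} w d(T);
  with the right-action convention the group element d(S)^{-1} w d(T) is the function
  dT T o w o inv (dT S).\<close>
definition yST :: "nat list \<Rightarrow> (nat \<times> nat \<Rightarrow> nat) \<Rightarrow> (nat \<times> nat \<Rightarrow> nat)
    \<Rightarrow> (nat \<Rightarrow> nat) \<Rightarrow> 'a::comm_ring_1" where
  "yST lam S T = (\<lambda>\<pi>. \<Sum>w\<in>young_subgroup lam.
      if dT lam T \<circ> w \<circ> inv (dT lam S) = \<pi> then of_int (sign w) else 0)"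

text \<open>V = K^n with basis e_0..e_{n-1}; V^{\<otimes>r} is free with basis the simple tensors
  e_{i(0)} \<otimes> ... \<otimes> e_{i(r-1)}, indexed by i in {..<r} ->E {..<n}.  A tensor is
  represented by its coefficient function on these indices (values elsewhere ignored).\<close>
definition tidx :: "nat \<Rightarrow> nat \<Rightarrow> (nat \<Rightarrow> nat) set" where
  "tidx n r = {..<r} \<rightarrow>\<^sub>E {..<n}"

text \<open>Place permutation on basis tensors: (u_1..u_r) sigma = u_{1 sigma^-1} ... u_{r sigma^-1},
  i.e. index i is sent to i o inv sigma.\<close>
definition Phi :: "nat \<Rightarrow> nat \<Rightarrow> ((nat \<Rightarrow> nat) \<Rightarrow> 'a::comm_ring_1)
    \<Rightarrow> ((nat \<Rightarrow> nat) \<Rightarrow> 'a) \<Rightarrow> ((nat \<Rightarrow> nat) \<Rightarrow> 'a)" where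
  "Phi n r x v = (\<lambda>j. \<Sum>i\<in>tidx n r. \<Sum>\<sigma>\<in>perms r.
      if i \<circ> inv \<sigma> = j then x \<sigma> * v i else 0)"

definition kerPhi :: "nat \<Rightarrow> nat \<Rightarrow> ((nat \<Rightarrow> nat) \<Rightarrow> 'a::comm_ring_1) set" where
  "kerPhi n r = {x \<in> group_alg r. \<forall>v. \<forall>j\<in>tidx n r. Phi n r x v j = 0}"

definition idxP :: "nat \<Rightarrow> nat \<Rightarrow> (nat list \<times> (nat \<times> nat \<Rightarrow> nat) \<times> (nat \<times> nat \<Rightarrow> nat)) set" where
  "idxP n r = {(lam, S, T). is_partition lam r \<and> lam \<noteq> [] \<and> hd lam > n \<and> standard lam S \<and> standard lam T}"

definition AP :: "nat \<Rightarrow> nat \<Rightarrow> ((nat \<Rightarrow> nat) \<Rightarrow> 'a::comm_ring_1) set" where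
  "AP n r = {x. \<exists>F c. finite F \<and> F \<subseteq> idxP n r \<and>
      x = (\<lambda>\<pi>. \<Sum>t\<in>F. c t * (case t of (lam, S, T) \<Rightarrow> yST lam S T \<pi>))}"

end

theory Submission
  imports Defs
begin

lemma sum_cancel_transp:
  fixes f :: "(nat \<Rightarrow> nat) \<Rightarrow> 'a::comm_ring_1"
  assumes fin: "finite Y" and perm: "\<And>w. w \<in> Y \<Longrightarrow> permutation w"
    and pq: "p \<noteq> q"
    and cl: "\<And>w. w \<in> Y \<Longrightarrow> w \<circ> transpose p q \<in> Y"
    and neg: "\<And>w. w \<in> Y \<Longrightarrow> f (w \<circ> transpose p q) = - f w"
  shows "sum f Y = 0"
proof -
  define t where "t = transpose p q"
  define E where "E = {w\<in>Y. evenperm w}"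
  define Od where "Od = {w\<in>Y. \<not> evenperm w}"
  have ev: "evenperm (w \<circ> t) = (\<not> evenperm w)" if "w \<in> Y" for w
    using evenperm_comp[OF perm[OF that] permutation_swap_id] pq
    by (simp add: t_def evenperm_swap)
  have tt: "w \<circ> t \<circ> t = w" for w by (simp add: t_def comp_assoc)
  have inj: "inj_on (\<lambda>w. w \<circ> t) E"
    by (metis (no_types, lifting) inj_onI tt)
  have img: "(\<lambda>w. w \<circ> t) ` E = Od"
  proof
    show "(\<lambda>w. w \<circ> t) ` E \<subseteq> Od" using cl ev by (auto simp: E_def Od_def t_def)
    show "Od \<subseteq> (\<lambda>w. w \<circ> t) ` E"
    proof
      fix o' assume o: "o' \<in> Od"
      then have "o' \<circ> t \<in> E" using cl ev by (auto simp: E_def Od_def t_def)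
      then show "o' \<in> (\<lambda>w. w \<circ> t) ` E" using tt by (metis image_eqI)
    qed
  qed
  have "sum f Od = sum (\<lambda>w. f (w \<circ> t)) E"
    using sum.reindex[OF inj, of f] img by simp
  also have "\<dots> = - sum f E" using neg by (simp add: E_def t_def sum_negf)
  finally have "sum f Od = - sum f E" .
  moreover have "Y = E \<union> Od" "E \<inter> Od = {}" by (auto simp: E_def Od_def)
  moreover have "finite E" "finite Od" using fin by (auto simp: E_def Od_def)
  ultimately show ?thesis by (simp add: sum.union_disjoint)
qed


lemma sum_take_mono: "i \<le> i' \<Longrightarrow> sum_list (take i (lam::nat list)) \<le> sum_list (take i' lam)"
proof -
  assume "i \<le> i'"
  then have "take i lam = take i (take i' lam)" by (simp add: min_absorb1)
  moreover have "sum_list (take i xs) \<le> sum_list xs" for xs :: "nat list"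
    by (metis append_take_drop_id le_add1 sum_list_append)
  ultimately show ?thesis by metis
qed

lemma Tlam_bounds:
  assumes "(i, j) \<in> boxes lam"
  shows "sum_list (take i lam) \<le> Tlam lam (i, j)" "Tlam lam (i, j) < sum_list (take (Suc i) lam)"
  using assms by (auto simp: Tlam_def boxes_def take_Suc_conv_app_nth)

lemma Tlam_inj: "inj_on (Tlam lam) (boxes lam)"
proof (rule inj_onI)
  fix x y assume x: "x \<in> boxes lam" and y: "y \<in> boxes lam" and e: "Tlam lam x = Tlam lam y"
  obtain i j i' j' where xy: "x = (i, j)" "y = (i', j')" by fastforce
  have "\<not> i < i'" if xb: "(i,j) \<in> boxes lam" and yb: "(i',j') \<in> boxes lam"
     and ee: "Tlam lam (i,j) = Tlam lam (i',j')" for i j i' j'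
  proof
    assume "i < i'"
    then have "Tlam lam (i,j) < sum_list (take i' lam)"
      using Tlam_bounds(2)[OF xb] sum_take_mono[of "Suc i" i' lam] by linarith
    also have "\<dots> \<le> Tlam lam (i',j')" using Tlam_bounds(1)[OF yb] .
    finally show False using ee by simp
  qed
  then have "i = i'" using x y e xy by (metis linorder_neqE_nat)
  then show "x = y" using e xy by (simp add: Tlam_def)
qed

lemma card_boxes: "card (boxes lam) = sum_list lam"
proof -
  have "boxes lam = Sigma {..<length lam} (\<lambda>i. {..<lam ! i})" by (auto simp: boxes_def)
  then have "card (boxes lam) = (\<Sum>i<length lam. lam ! i)" by simp
  also have "\<dots> = sum_list lam" by (simp add: sum_list_sum_nth atLeast0LessThan)
  finally show ?thesis .
qed

lemma finite_boxes: "finite (boxes lam)"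
proof -
  have "boxes lam = Sigma {..<length lam} (\<lambda>i. {..<lam ! i})" by (auto simp: boxes_def)
  then show ?thesis by simp
qed

lemma Tlam_bij: "bij_betw (Tlam lam) (boxes lam) {..<sum_list lam}"
proof -
  have sub: "Tlam lam ` boxes lam \<subseteq> {..<sum_list lam}"
  proof
    fix y assume "y \<in> Tlam lam ` boxes lam"
    then obtain i j where b: "(i,j) \<in> boxes lam" and y: "y = Tlam lam (i,j)" by auto
    have "sum_list (take (Suc i) lam) \<le> sum_list lam"
      by (metis append_take_drop_id le_add1 sum_list_append)
    then show "y \<in> {..<sum_list lam}" using Tlam_bounds(2)[OF b] y by simp
  qed
  have "card (Tlam lam ` boxes lam) = sum_list lam"
    using card_image[OF Tlam_inj] card_boxes by simp
  then have "Tlam lam ` boxes lam = {..<sum_list lam}"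
    using sub by (simp add: card_subset_eq)
  then show ?thesis using Tlam_inj by (simp add: bij_betw_def)
qed

lemma dT_perm:
  assumes "tableau lam T"
  shows "dT lam T \<in> perms (sum_list lam)"
proof -
  let ?r = "sum_list lam"
  let ?B = "boxes lam"
  have TB: "bij_betw T ?B {..<?r}" using assms by (simp add: tableau_def)
  have LB: "bij_betw (Tlam lam) ?B {..<?r}" by (rule Tlam_bij)
  define s where "s = (\<lambda>x. if x < ?r then T (inv_into ?B (Tlam lam) x) else x)"
  have "bij_betw (T \<circ> inv_into ?B (Tlam lam)) {..<?r} {..<?r}"
    using bij_betw_trans[OF bij_betw_inv_into[OF LB] TB] .
  then have "bij_betw s {..<?r} {..<?r}"
    by (rule bij_betw_cong[THEN iffD1, rotated]) (simp add: s_def)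
  then have sp: "s permutes {..<?r}" by (rule bij_imp_permutes) (simp add: s_def)
  have sT: "\<forall>b\<in>?B. T b = tab_act (Tlam lam) s b"
  proof
    fix b assume b: "b \<in> ?B"
    have "Tlam lam b < ?r" using LB b by (auto simp: bij_betw_def)
    then show "T b = tab_act (Tlam lam) s b"
      using b Tlam_inj by (simp add: tab_act_def s_def inv_into_f_f)
  qed
  have uniq: "s' = s" if "s' \<in> perms ?r" "\<forall>b\<in>?B. T b = tab_act (Tlam lam) s' b" for s'
  proof
    fix x show "s' x = s x"
    proof (cases "x < ?r")
      case True
      then have "x \<in> Tlam lam ` ?B" using LB by (auto simp: bij_betw_def)
      then obtain b where b: "b \<in> ?B" "x = Tlam lam b" by blast
      then show ?thesis using that sT by (simp add: tab_act_def)
    next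
      case False
      have "s' x = x" using that(1) False by (simp add: perms_def permutes_not_in)
      moreover have "s x = x" using sp False by (simp add: permutes_not_in)
      ultimately show ?thesis by simp
    qed
  qed
  have "\<exists>!s. s \<in> perms ?r \<and> (\<forall>b\<in>?B. T b = tab_act (Tlam lam) s b)"
    proof (rule ex1I[of _ s])
    show "s \<in> perms ?r \<and> (\<forall>b\<in>?B. T b = tab_act (Tlam lam) s b)" using sp sT by (simp add: perms_def)
  qed (use uniq in blast)
  from theI'[OF this] show ?thesis unfolding dT_def by blast
qed


lemma young_perms: "young_subgroup lam \<subseteq> perms (sum_list lam)"
  by (auto simp: young_subgroup_def)

lemma Tlam_first_row: "Tlam lam (0, q) = q" by (simp add: Tlam_def)

lemma Tlam_small_row0:
  assumes "bb \<in> boxes lam" "Tlam lam bb < hd lam" "lam \<noteq> []"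
  shows "fst bb = 0"
proof (rule ccontr)
  obtain i j where bb: "bb = (i,j)" by fastforce
  assume "fst bb \<noteq> 0"
  then have "Suc 0 \<le> i" using bb by simp
  then have "sum_list (take (Suc 0) lam) \<le> sum_list (take i lam)" by (rule sum_take_mono)
  moreover have "sum_list (take (Suc 0) lam) = hd lam" using assms(3) by (cases lam) auto
  moreover have "sum_list (take i lam) \<le> Tlam lam bb" using Tlam_bounds(1) assms(1) bb by simp
  ultimately show False using assms(2) by simp
qed

lemma young_closed:
  assumes w: "w \<in> young_subgroup lam" and ne: "lam \<noteq> []"
    and p: "p < hd lam" and q: "q < hd lam" and hr: "hd lam \<le> sum_list lam"
  shows "w \<circ> transpose p q \<in> young_subgroup lam"
proof -
  let ?r = "sum_list lam"
  have tp: "transpose p q permutes {..<?r}" using p q hr by (intro permutes_swap_id) auto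
  have wp: "w permutes {..<?r}" using w by (auto simp: young_subgroup_def perms_def)
  have wc: "w \<circ> transpose p q \<in> perms ?r" using permutes_compose[OF tp wp] by (simp add: perms_def)
  have wrow: "\<And>b. b \<in> boxes lam \<Longrightarrow> \<exists>j. (fst b, j) \<in> boxes lam \<and> w (Tlam lam b) = Tlam lam (fst b, j)"
    using w by (auto simp: young_subgroup_def)
  have hd0: "hd lam = lam ! 0" using ne by (cases lam) auto
  have b0: "(0, x) \<in> boxes lam" if "x < hd lam" for x using that ne hd0 by (auto simp: boxes_def)
  have "\<exists>j. (fst b, j) \<in> boxes lam \<and> (w \<circ> transpose p q) (Tlam lam b) = Tlam lam (fst b, j)"
    if b: "b \<in> boxes lam" for b
  proof (cases "Tlam lam b = p \<or> Tlam lam b = q")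
    case True
    then have f0: "fst b = 0" using Tlam_small_row0[OF b] p q ne by auto
    from True obtain x where x: "x < hd lam" "transpose p q (Tlam lam b) = Tlam lam (0, x)"
      using p q by (auto simp: Tlam_first_row)
    from wrow[OF b0[OF x(1)]] x f0 show ?thesis by simp
  next
    case False
    then show ?thesis using wrow[OF b] by simp
  qed
  then show ?thesis using wc by (auto simp: young_subgroup_def)
qed


lemma idxP_facts:
  assumes "(lam, S, T) \<in> idxP n r"
  shows "sum_list lam = r" "lam \<noteq> []" "hd lam > n" "dT lam T \<in> perms r" "dT lam S \<in> perms r"
    "hd lam \<le> r"
proof -
  have st: "standard lam S" "standard lam T" "is_partition lam r" "lam \<noteq> []" "hd lam > n"
    using assms by (auto simp: idxP_def)
  show "sum_list lam = r" using st by (simp add: is_partition_def)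
  show "lam \<noteq> []" "hd lam > n" using st by auto
  show "dT lam T \<in> perms r" "dT lam S \<in> perms r"
    using dT_perm st \<open>sum_list lam = r\<close> by (auto simp: standard_def row_standard_def)
  show "hd lam \<le> r" using st \<open>sum_list lam = r\<close> by (cases lam) auto
qed

lemma yST_support:
  assumes "(lam, S, T) \<in> idxP n r" "\<sigma> \<notin> perms r"
  shows "(yST lam S T \<sigma> :: 'a::comm_ring_1) = 0"
proof -
  note f = idxP_facts[OF assms(1)]
  have "dT lam T \<circ> w \<circ> inv (dT lam S) \<noteq> \<sigma>" if "w \<in> young_subgroup lam" for w
  proof -
    have "w permutes {..<r}" using that young_perms f(1) by (auto simp: perms_def)
    moreover have "dT lam T permutes {..<r}" "inv (dT lam S) permutes {..<r}"
      using f(4,5) by (auto simp: perms_def permutes_inv)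
    ultimately have "dT lam T \<circ> w \<circ> inv (dT lam S) permutes {..<r}"
      by (metis permutes_compose)
    then show ?thesis using assms(2) by (auto simp: perms_def)
  qed
  then show ?thesis unfolding yST_def by (intro sum.neutral) auto
qed

lemma yST_key:
  assumes t: "(lam, S, T) \<in> idxP n r" and i: "i \<in> tidx n r"
  shows "(\<Sum>\<sigma>\<in>perms r. if i \<circ> inv \<sigma> = j then (yST lam S T \<sigma> :: 'a::comm_ring_1) else 0) = 0"
proof -
  note f = idxP_facts[OF t]
  define a where "a = dT lam T"
  define b where "b = dT lam S"
  define Y where "Y = young_subgroup lam"
  define g where "g = (\<lambda>w. a \<circ> w \<circ> inv b)"
  have ap: "a permutes {..<r}" and bp: "b permutes {..<r}" using f(4,5) by (auto simp: perms_def a_def b_def)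
  have Yp: "w permutes {..<r}" if "w \<in> Y" for w using that young_perms f(1) by (auto simp: perms_def Y_def)
  have finY: "finite Y" using young_perms[of lam] f(1) finite_permutations[of "{..<r}"]
    by (auto simp: Y_def perms_def intro: finite_subset)
  have gp: "g w \<in> perms r" if "w \<in> Y" for w
    using permutes_compose[OF permutes_inv[OF bp] permutes_compose[OF Yp[OF that] ap]]
    by (simp add: g_def perms_def comp_assoc)
  have "(\<Sum>\<sigma>\<in>perms r. if i \<circ> inv \<sigma> = j then (yST lam S T \<sigma> :: 'a) else 0)
      = (\<Sum>\<sigma>\<in>perms r. \<Sum>w\<in>Y. if \<sigma> = g w then (if i \<circ> inv (g w) = j then of_int (sign w) else 0) else 0)"
  proof (intro sum.cong refl)
    fix \<sigma>
    show "(if i \<circ> inv \<sigma> = j then (yST lam S T \<sigma> :: 'a) else 0)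
      = (\<Sum>w\<in>Y. if \<sigma> = g w then (if i \<circ> inv (g w) = j then of_int (sign w) else 0) else 0)"
    proof (cases "i \<circ> inv \<sigma> = j")
      case True
      then show ?thesis unfolding yST_def a_def[symmetric] b_def[symmetric] Y_def[symmetric]
        by (auto simp: g_def intro!: sum.cong)
    next
      case False
      have "(\<Sum>w\<in>Y. if \<sigma> = g w then (if i \<circ> inv (g w) = j then of_int (sign w) else 0) else (0::'a)) = 0"
        using False by (intro sum.neutral) auto
      then show ?thesis using False by simp
    qed
  qed
  also have "\<dots> = (\<Sum>w\<in>Y. \<Sum>\<sigma>\<in>perms r. if \<sigma> = g w then (if i \<circ> inv (g w) = j then of_int (sign w) else 0) else 0)"
    by (rule sum.swap)
  also have "\<dots> = (\<Sum>w\<in>Y. if i \<circ> inv (g w) = j then of_int (sign w) else 0)"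
    using gp finite_permutations[of "{..<r}"] by (intro sum.cong refl) (simp add: perms_def)
  also have "\<dots> = 0"
  proof -
    let ?k = "i \<circ> b"
    have kin: "?k x < n" if "x < hd lam" for x
    proof -
      have "x < r" using that f(6) by simp
      then have "b x < r" using bp permutes_in_image by fastforce
      then show ?thesis using i by (auto simp: tidx_def PiE_def Pi_def)
    qed
    have "\<not> inj_on ?k {..<hd lam}"
    proof
      assume inj: "inj_on ?k {..<hd lam}"
      have "?k ` {..<hd lam} \<subseteq> {..<n}" using kin by auto
      then have "card (?k ` {..<hd lam}) \<le> n" by (metis card_lessThan card_mono finite_lessThan)
      then show False using card_image[OF inj] f(3) by simp
    qed
    then obtain p q where pq: "p < hd lam" "q < hd lam" "p \<noteq> q" "i (b p) = i (b q)"
      by (auto simp: inj_on_def)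
    define tau where "tau = transpose p q"
    have kt: "?k \<circ> tau = ?k" using pq by (auto simp: tau_def transpose_def fun_eq_iff)
    have bij: "bij a" "bij b" "bij tau" using ap bp by (auto simp: permutes_bij tau_def)
    have ginv: "inv (g w) = b \<circ> inv w \<circ> inv a" if "w \<in> Y" for w
    proof -
      have bw: "bij w" using Yp[OF that] permutes_bij by blast
      have bib: "bij (inv b)" using bij(2) bij_imp_bij_inv by blast
      have "inv (g w) = inv (w \<circ> inv b) \<circ> inv a"
        unfolding g_def comp_assoc using o_inv_distrib[OF bij(1) bij_comp[OF bib bw]] by simp
      also have "inv (w \<circ> inv b) = inv (inv b) \<circ> inv w" using o_inv_distrib[OF bw bib] .
      also have "inv (inv b) = b" using inv_inv_eq[OF bij(2)] .
      finally show ?thesis by (simp add: comp_def)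
    qed
    show ?thesis
    proof (rule sum_cancel_transp[OF finY _ pq(3)])
      fix w assume w: "w \<in> Y"
      show "permutation w" using Yp[OF w] by (auto simp: permutation_permutes)
      show wt: "w \<circ> transpose p q \<in> Y"
        using young_closed[OF _ f(2) pq(1,2)] w f(1,6) by (simp add: Y_def)
      have "inv (g (w \<circ> tau)) = b \<circ> tau \<circ> inv w \<circ> inv a"
        using ginv[OF wt[folded tau_def]] bij Yp[OF w]
        by (simp add: o_inv_distrib permutes_bij tau_def comp_assoc)
      then have "i \<circ> inv (g (w \<circ> tau)) = i \<circ> inv (g w)"
        using ginv[OF w] kt by (metis comp_assoc)
      moreover have "sign (w \<circ> tau) = - sign w"
        using sign_compose[OF \<open>permutation w\<close> permutation_swap_id] pq(3)
        by (simp add: tau_def sign_swap_id)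
      ultimately show "(if i \<circ> inv (g (w \<circ> transpose p q)) = j then of_int (sign (w \<circ> transpose p q)) else 0)
          = - (if i \<circ> inv (g w) = j then (of_int (sign w)::'a) else 0)"
        by (simp add: tau_def)
    qed
  qed
  finally show ?thesis .
qed


theorem lemma3p4:
  fixes n r :: nat
  assumes "n \<ge> 1" and "r \<ge> 1"
  shows "(AP n r :: ((nat \<Rightarrow> nat) \<Rightarrow> 'a::idom) set) \<subseteq> kerPhi n r"
proof
  fix x :: "(nat \<Rightarrow> nat) \<Rightarrow> 'a"
  assume "x \<in> AP n r"
  then obtain F c where F: "finite F" "F \<subseteq> idxP n r"
    and x: "x = (\<lambda>\<pi>. \<Sum>t\<in>F. c t * (case t of (lam, S, T) \<Rightarrow> yST lam S T \<pi>))"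
    by (auto simp: AP_def)
  define Yt where "Yt = (\<lambda>t \<pi>. (case t of (lam, S, T) \<Rightarrow> (yST lam S T \<pi> :: 'a)))"
  have x': "x = (\<lambda>\<pi>. \<Sum>t\<in>F. c t * Yt t \<pi>)" using x by (simp add: Yt_def)
  have supp: "Yt t \<sigma> = 0" if "t \<in> F" "\<sigma> \<notin> perms r" for t \<sigma>
  proof -
    obtain lam S T where t: "t = (lam, S, T)" by (cases t) auto
    then have "(lam, S, T) \<in> idxP n r" using that F(2) by auto
    from yST_support[OF this that(2)] show ?thesis by (simp add: Yt_def t)
  qed
  have key: "(\<Sum>\<sigma>\<in>perms r. if i \<circ> inv \<sigma> = j then Yt t \<sigma> else 0) = 0"
    if "t \<in> F" "i \<in> tidx n r" for t i j
  proof -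
    obtain lam S T where t: "t = (lam, S, T)" by (cases t) auto
    then have tI: "(lam, S, T) \<in> idxP n r" using that F(2) by auto
    have "(\<Sum>\<sigma>\<in>perms r. if i \<circ> inv \<sigma> = j then (yST lam S T \<sigma> :: 'a) else 0) = 0"
      by (rule yST_key[OF tI that(2)])
    then show ?thesis unfolding Yt_def t prod.case .
  qed
  have ga: "x \<in> group_alg r" using supp by (simp add: x' group_alg_def)
  have "Phi n r x v j = 0" if "j \<in> tidx n r" for v j
  proof -
    have "Phi n r x v j = (\<Sum>i\<in>tidx n r. \<Sum>\<sigma>\<in>perms r. \<Sum>t\<in>F.
        c t * v i * (if i \<circ> inv \<sigma> = j then Yt t \<sigma> else 0))"
      unfolding Phi_def x'
      by (intro sum.cong refl) (auto simp: sum_distrib_right sum_distrib_left mult_ac)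
    also have "\<dots> = (\<Sum>i\<in>tidx n r. \<Sum>t\<in>F. c t * v i *
        (\<Sum>\<sigma>\<in>perms r. if i \<circ> inv \<sigma> = j then Yt t \<sigma> else 0))"
      by (intro sum.cong refl) (simp add: sum.swap[of _ "perms r"] sum_distrib_left)
    also have "\<dots> = 0" using key by simp
    finally show ?thesis .
  qed
  then show "x \<in> kerPhi n r" using ga by (simp add: kerPhi_def)
qed

end
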